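(* Let $\Omega \subset \mathbb{R}\mathrm{P}^{d-1}$ be a properly convex domain, and let $\Lambda \subseteq \partial\Omega$ be a boundary-convex subset containing all of its faces. Let $\mathcal{H}$ be a collection of subgroups of $\mathrm{Aut}(\Omega)$, each acting convex cocompactly on $\Omega$, whose full orbital limit sets $\Lambda_\Omega(H_i)$, $H_i \in \mathcal{H}$, are pairwise disjoint. Suppose every point of \[ \Lambda_c = \Lambda - \bigcup_{H_i \in \mathcal{H}} \Lambda_\Omega(H_i) \] is an extreme point of $\partial\Omega$. Then for any $x, y \in \Lambda$ such that $x \neq y$ and $x, y$ do not both lie in a common $\Lambda_\Omega(H_i)$, the open projective segment $(x,y)$ (the one contained in $\overline{\Omega}$) lies in $\Omega$.
   Context: A properly convex domain is an open subset $\Omega$ of real projective space whose closure is contained in some affine chart and is convex there; $\mathrm{Aut}(\Omega)$ is the subgroup of $\mathrm{PGL}(d,\mathbb{R})$ preserving $\Omega$. For $H \subseteq \mathrm{Aut}(\Omega)$, $\Lambda_\Omega(H)$ (the full orbital limit set) is the set of all accumulation points in $\partial\Omega$ of orbits $H\cdot x$, $x\in\Omega$; $H$ acts convex cocompactly on $\Omega$ if $H$ is discrete, the convex hull $\mathrm{Cor}_\Omega(H)$ of $\Lambda_\Omega(H)$ in $\Omega$ is nonempty, and $H$ acts cocompactly on it. A subset $\Lambda \subseteq \partial\Omega$ is boundary-convex if whenever $x,y \in \Lambda$ and the segment $(x,y)$ lies in $\partial\Omega$, then $(x,y) \subseteq \Lambda$. For $x \in \partial\Omega$, the face $F_\Omega(x)$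 consists of $x$ together with all $y\in\partial\Omega$ such that $x,y$ both lie in the interior of some open projective segment contained in $\partial\Omega$; $\Lambda$ contains all of its faces if $x\in\Lambda$ implies $F_\Omega(x)\subseteq\Lambda$. A point of $\partial\Omega$ is extreme if it lies in the interior of no nontrivial projective segment contained in $\partial\Omega$. *)

theory Defs
  imports "HOL-Analysis.Analysis"
begin

(* A properly convex domain in RP^{d-1} is given together with an
   affine chart whose closure-containing property holds: the chart is the complement of
   the projective hyperplane P(ker f), identified with the affine hyperplane
   {v. f \<bullet> v = 1} in R^d (each point of the chart is represented by its unique
   representative there).  PGL(d,R) = SL^{\<plusminus>}(d,R)/{\<plusminus>1}; a subgroup of PGL(d,R) is
   represented by its full preimage in SL^{\<plusminus>}(d,R) (matrices with |det| = 1). *)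

definition affine_chart :: "real^'n \<Rightarrow> (real^'n) set" where
  "affine_chart f = {v. f \<bullet> v = 1}"

(* Omega (given inside the chart of f) is a properly convex domain: nonempty, open in
   projective space (i.e. open in the chart), convex in the chart, and its closure in
   projective space lies in the chart (i.e. Omega is bounded in the chart). *)
definition properly_convex_domain :: "real^'n \<Rightarrow> (real^'n) set \<Rightarrow> bool" where
  "properly_convex_domain f \<Omega> \<longleftrightarrow> f \<noteq> 0 \<and> \<Omega> \<noteq> {} \<and> \<Omega> \<subseteq> affine_chart f \<and>
     openin (top_of_set (affine_chart f)) \<Omega> \<and> convex \<Omega> \<and> bounded \<Omega>"

(* boundary of Omega in projective space (closure lies in the chart) *)
definition pboundary :: "(real^'n) set \<Rightarrow> (real^'n) set" where
  "pboundary \<Omega> = closure \<Omega> - \<Omega>"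

definition proj_act :: "real^'n \<Rightarrow> real^'n^'n \<Rightarrow> real^'n \<Rightarrow> real^'n" where
  "proj_act f g v = (1 / (f \<bullet> (g *v v))) *\<^sub>R (g *v v)"

definition Aut :: "real^'n \<Rightarrow> (real^'n) set \<Rightarrow> (real^'n^'n) set" where
  "Aut f \<Omega> = {g. \<bar>det g\<bar> = 1 \<and> (\<forall>v\<in>\<Omega>. f \<bullet> (g *v v) \<noteq> 0) \<and> proj_act f g ` \<Omega> = \<Omega>}"

definition aut_subgroup :: "real^'n \<Rightarrow> (real^'n) set \<Rightarrow> (real^'n^'n) set \<Rightarrow> bool" where
  "aut_subgroup f \<Omega> H \<longleftrightarrow> H \<subseteq> Aut f \<Omega> \<and> mat 1 \<in> H \<and> - mat 1 \<in> H \<and>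
     (\<forall>g\<in>H. \<forall>h\<in>H. g ** h \<in> H) \<and> (\<forall>g\<in>H. matrix_inv g \<in> H)"

definition orbit :: "real^'n \<Rightarrow> (real^'n^'n) set \<Rightarrow> real^'n \<Rightarrow> (real^'n) set" where
  "orbit f H x = (\<lambda>g. proj_act f g x) ` H"

definition orbital_limit_set :: "real^'n \<Rightarrow> (real^'n) set \<Rightarrow> (real^'n^'n) set \<Rightarrow> (real^'n) set" where
  "orbital_limit_set f \<Omega> H = {p \<in> pboundary \<Omega>. \<exists>x\<in>\<Omega>. p islimpt orbit f H x}"

definition Cor :: "real^'n \<Rightarrow> (real^'n) set \<Rightarrow> (real^'n^'n) set \<Rightarrow> (real^'n) set" where
  "Cor f \<Omega> H = \<Omega> \<inter> convex hull (orbital_limit_set f \<Omega> H)"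

definition convex_cocompact :: "real^'n \<Rightarrow> (real^'n) set \<Rightarrow> (real^'n^'n) set \<Rightarrow> bool" where
  "convex_cocompact f \<Omega> H \<longleftrightarrow> discrete H \<and> Cor f \<Omega> H \<noteq> {} \<and>
     (\<exists>K. compact K \<and> K \<subseteq> Cor f \<Omega> H \<and> Cor f \<Omega> H \<subseteq> (\<Union>g\<in>H. proj_act f g ` K))"

definition boundary_convex :: "(real^'n) set \<Rightarrow> (real^'n) set \<Rightarrow> bool" where
  "boundary_convex \<Omega> \<Lambda> \<longleftrightarrow> (\<forall>x\<in>\<Lambda>. \<forall>y\<in>\<Lambda>. open_segment x y \<subseteq> pboundary \<Omega> \<longrightarrow> open_segment x y \<subseteq> \<Lambda>)"

definition face :: "(real^'n) set \<Rightarrow> real^'n \<Rightarrow> (real^'n) set" where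
  "face \<Omega> x = insert x {y \<in> pboundary \<Omega>. \<exists>a b. a \<noteq> b \<and> open_segment a b \<subseteq> pboundary \<Omega> \<and>
       x \<in> open_segment a b \<and> y \<in> open_segment a b}"

definition contains_faces :: "(real^'n) set \<Rightarrow> (real^'n) set \<Rightarrow> bool" where
  "contains_faces \<Omega> \<Lambda> \<longleftrightarrow> (\<forall>x\<in>\<Lambda>. face \<Omega> x \<subseteq> \<Lambda>)"

definition extreme_bdry :: "(real^'n) set \<Rightarrow> real^'n \<Rightarrow> bool" where
  "extreme_bdry \<Omega> p \<longleftrightarrow> p \<in> pboundary \<Omega> \<and>
     \<not> (\<exists>a b. a \<noteq> b \<and> open_segment a b \<subseteq> pboundary \<Omega> \<and> p \<in> open_segment a b)"

end

theory Submission
  imports Defs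
begin

lemma tendsto_mv:
  fixes A :: "nat \<Rightarrow> real^'n^'m" and x :: "nat \<Rightarrow> real^'n"
  assumes "A \<longlonglongrightarrow> a" "x \<longlonglongrightarrow> b"
  shows "(\<lambda>n. A n *v x n) \<longlonglongrightarrow> a *v b"
  unfolding matrix_vector_mult_def
  by (intro tendsto_vec_lambda tendsto_sum tendsto_mult tendsto_vec_nth assms)

lemma tseq: "(\<lambda>n. inverse (real (Suc n)) / 2) \<longlonglongrightarrow> 0"
  using tendsto_divide_zero[OF LIMSEQ_inverse_real_of_nat, of 2] by simp

lemma tseq_pos: "0 < inverse (real (Suc n)) / 2" "inverse (real (Suc n)) / 2 < 1"
  by (auto simp: field_simps)

lemma comb_lim:
  fixes a b :: "'a::real_normed_vector"
  assumes "t \<longlonglongrightarrow> 0"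
  shows "(\<lambda>n. (1 - t n) *\<^sub>R a + t n *\<^sub>R b) \<longlonglongrightarrow> a"
proof -
  have "(\<lambda>n. (1 - t n) *\<^sub>R a + t n *\<^sub>R b) \<longlonglongrightarrow> (1 - 0) *\<^sub>R a + 0 *\<^sub>R b"
    by (intro tendsto_intros assms)
  then show ?thesis by simp
qed

context
  fixes f :: "real^'n" and \<Omega> :: "(real^'n) set"
  assumes pcd: "properly_convex_domain f \<Omega>"
begin

lemma om_chart: "\<Omega> \<subseteq> affine_chart f"
  using pcd by (simp add: properly_convex_domain_def)

lemma om_open: "openin (top_of_set (affine_chart f)) \<Omega>"
  using pcd by (simp add: properly_convex_domain_def)

lemma om_convex: "convex \<Omega>"
  using pcd by (simp add: properly_convex_domain_def)

lemma om_f: "v \<in> \<Omega> \<Longrightarrow> f \<bullet> v = 1"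
  using om_chart by (auto simp: affine_chart_def)

lemma cl_f: "v \<in> closure \<Omega> \<Longrightarrow> f \<bullet> v = 1"
proof -
  assume "v \<in> closure \<Omega>"
  moreover have "closure \<Omega> \<subseteq> affine_chart f"
    using om_chart closure_minimal[of \<Omega> "affine_chart f"] closed_hyperplane[of f 1]
    by (simp add: affine_chart_def)
  ultimately show ?thesis by (auto simp: affine_chart_def)
qed

lemma cl_compact: "compact (closure \<Omega>)"
  using pcd by (simp add: properly_convex_domain_def compact_eq_bounded_closed bounded_closure)

lemma rel_int: "rel_interior \<Omega> = \<Omega>"
proof -
  have h: "affine hull \<Omega> \<subseteq> affine_chart f"
    by (rule hull_minimal[OF om_chart]) (simp add: affine_chart_def affine_hyperplane)
  have "openin (top_of_set (affine hull \<Omega>)) \<Omega>"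
    by (rule openin_subset_trans[OF om_open hull_subset h])
  then have "rel_open \<Omega>" by (simp only: rel_open)
  then show ?thesis by (simp only: rel_open_def)
qed

lemma mix:
  assumes "c \<in> \<Omega>" "p \<in> closure \<Omega>" "0 < t" "t \<le> 1"
  shows "(1 - t) *\<^sub>R p + t *\<^sub>R c \<in> \<Omega>"
proof (cases "t = 1 \<or> p = c")
  case True
  then show ?thesis using assms
    by (auto simp: algebra_simps simp flip: scaleR_add_left)
next
  case False
  then have "(1 - t) *\<^sub>R p + t *\<^sub>R c \<in> open_segment c p"
    unfolding in_segment using assms by (intro conjI exI[of _ "1 - t"]) (auto simp: algebra_simps)
  then show ?thesis
    using rel_interior_closure_convex_segment[OF om_convex, of c p] assms rel_int by auto
qed

lemma aut_in: "g \<in> Aut f \<Omega> \<Longrightarrow> v \<in> \<Omega> \<Longrightarrow> proj_act f g v \<in> \<Omega>"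
  by (auto simp: Aut_def)

lemma aut_nz: "g \<in> Aut f \<Omega> \<Longrightarrow> v \<in> \<Omega> \<Longrightarrow> f \<bullet> (g *v v) \<noteq> 0"
  by (auto simp: Aut_def)

lemma aut_surj: "g \<in> Aut f \<Omega> \<Longrightarrow> v \<in> \<Omega> \<Longrightarrow> \<exists>u\<in>\<Omega>. proj_act f g u = v"
  by (auto simp: Aut_def image_iff) (metis imageE)

lemma aut_inj:
  assumes "g \<in> Aut f \<Omega>" "g *v u = g *v v"
  shows "u = v"
proof -
  have "det g \<noteq> 0" using assms by (auto simp: Aut_def)
  then obtain B where "B ** g = mat 1"
    by (auto simp: invertible_det_nz[symmetric] invertible_def)
  then show ?thesis
    by (metis assms(2) matrix_vector_mul_assoc matrix_vector_mul_lid)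
qed

lemma lift: "f \<bullet> (g *v v) \<noteq> 0 \<Longrightarrow> g *v v = (f \<bullet> (g *v v)) *\<^sub>R proj_act f g v"
  by (simp add: proj_act_def)

lemma sign:
  assumes g: "g \<in> Aut f \<Omega>" and u: "u \<in> \<Omega>" and v: "v \<in> \<Omega>"
  shows "(f \<bullet> (g *v u)) * (f \<bullet> (g *v v)) > 0"
proof (rule ccontr)
  define a where "a = f \<bullet> (g *v u)"
  define b where "b = f \<bullet> (g *v v)"
  assume "\<not> ?thesis"
  moreover have "a \<noteq> 0" "b \<noteq> 0" using aut_nz[OF g] u v by (auto simp: a_def b_def)
  ultimately have ab: "a * b < 0" by (simp add: a_def b_def not_less order_le_less)
  define t where "t = a / (a - b)"
  have "a - b \<noteq> 0" using ab by auto
  have t01: "0 \<le> t" "t \<le> 1" using ab unfolding t_def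
    by (auto simp: field_simps mult_less_0_iff divide_simps split: if_splits)
  have "(1 - t) *\<^sub>R u + t *\<^sub>R v \<in> \<Omega>"
    using convexD[OF om_convex u v, of "1 - t" t] t01 by auto
  moreover have "f \<bullet> (g *v ((1 - t) *\<^sub>R u + t *\<^sub>R v)) = (1 - t) * a + t * b"
    by (simp add: a_def b_def matrix_vector_right_distrib matrix_vector_mult_scaleR inner_add_right)
  moreover have "(1 - t) * a + t * b = 0"
    using \<open>a - b \<noteq> 0\<close> unfolding t_def by (simp add: field_simps)
  ultimately show False using aut_nz[OF g] by metis
qed


lemma kernel_lemma:
  fixes G :: "nat \<Rightarrow> real^'n^'n" and M :: "nat \<Rightarrow> real^'n^'n"
  assumes G: "\<And>n. G n \<in> Aut f \<Omega>"
    and M: "\<And>n. M n = (1 / norm (G n)) *\<^sub>R G n"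
    and nG: "\<And>n. G n \<noteq> 0"
    and lim: "M \<longlonglongrightarrow> A" and nA: "A \<noteq> 0"
    and u: "u \<in> \<Omega>"
  shows "A *v u \<noteq> 0"
proof
  assume Au: "A *v u = 0"
  have "\<exists>v. f \<bullet> v = 0 \<and> A *v v \<noteq> 0"
  proof (rule ccontr)
    assume "\<not> ?thesis"
    then have h: "\<And>v. f \<bullet> v = 0 \<Longrightarrow> A *v v = 0" by blast
    have "A *v y = 0 *v y" for y
    proof -
      have "f \<bullet> (y - (f \<bullet> y) *\<^sub>R u) = 0" using om_f[OF u] by (simp add: inner_diff_right)
      then have "A *v (y - (f \<bullet> y) *\<^sub>R u) = 0" by (rule h)
      moreover have "y = (y - (f \<bullet> y) *\<^sub>R u) + (f \<bullet> y) *\<^sub>R u" by simp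
      ultimately have "A *v y = 0 + (f \<bullet> y) *\<^sub>R (A *v u)"
        by (metis matrix_vector_right_distrib matrix_vector_mult_scaleR)
      then show ?thesis using Au by simp
    qed
    then have "A = 0" by (simp add: matrix_eq)
    then show False using nA by simp
  qed
  then obtain v where fv: "f \<bullet> v = 0" and Av: "A *v v \<noteq> 0" by blast
  obtain e where e: "e > 0" "ball u e \<inter> affine_chart f \<subseteq> \<Omega>"
    using om_open u unfolding openin_contains_ball by blast
  define d where "d = e / (2 * (norm v + 1))"
  have "norm v + 1 > 0" using norm_ge_zero[of v] by linarith
  then have "2 * (norm v + 1) > 0" by (metis mult_pos_pos zero_less_numeral)
  then have d: "d > 0" using e unfolding d_def by simp
  have dv: "norm (d *\<^sub>R v) < e"
  proof -
    have "norm (d *\<^sub>R v) = e * norm v / (2 * (norm v + 1))" using e by (simp add: d_def)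
    also have "\<dots> < e"
    proof -
      have aux: "\<And>t::real. 0 \<le> t \<Longrightarrow> 0 < 2 * (t + 1) \<and> t < 2 * (t + 1)" by auto
      have p: "2 * (norm v + 1) > 0" using aux[OF norm_ge_zero[of v]] by blast
      have "e * norm v < e * (2 * (norm v + 1))"
        using e aux[OF norm_ge_zero[of v]] by (intro mult_strict_left_mono) auto
      then show ?thesis using p by (simp add: divide_less_eq)
    qed
    finally show ?thesis .
  qed
  define z1 where "z1 = u + d *\<^sub>R v"
  define z2 where "z2 = u - d *\<^sub>R v"
  have z1: "z1 \<in> \<Omega>" using e dv om_f[OF u] fv
    by (intro subsetD[OF e(2)]) (auto simp: z1_def affine_chart_def dist_norm inner_add_right)
  have z2: "z2 \<in> \<Omega>" using e dv om_f[OF u] fv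
    by (intro subsetD[OF e(2)]) (auto simp: z2_def affine_chart_def dist_norm inner_diff_right)
  define a where "a n = f \<bullet> (M n *v z1)" for n
  define b where "b n = f \<bullet> (M n *v z2)" for n
  have Mz1: "(\<lambda>n. M n *v z1) \<longlonglongrightarrow> d *\<^sub>R (A *v v)"
    using tendsto_mv[OF lim tendsto_const[of z1]] Au
    by (simp add: z1_def matrix_vector_right_distrib matrix_vector_mult_scaleR)
  have Mz2: "(\<lambda>n. M n *v z2) \<longlonglongrightarrow> - (d *\<^sub>R (A *v v))"
    using tendsto_mv[OF lim tendsto_const[of z2]] Au
    by (simp add: z2_def matrix_vector_mult_diff_distrib matrix_vector_mult_scaleR)
  have alim: "a \<longlonglongrightarrow> d * (f \<bullet> (A *v v))"
    unfolding a_def using tendsto_inner[OF tendsto_const[of f] Mz1] by simp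
  have blim: "b \<longlonglongrightarrow> - (d * (f \<bullet> (A *v v)))"
    unfolding b_def using tendsto_inner[OF tendsto_const[of f] Mz2] by simp
  have abpos: "a n * b n > 0" for n
  proof -
    have Mv: "M n *v z = (1 / norm (G n)) *\<^sub>R (G n *v z)" for z
      by (metis M scaleR_matrix_vector_assoc)
    have "a n * b n = ((1 / norm (G n)) * (1 / norm (G n))) * ((f \<bullet> (G n *v z1)) * (f \<bullet> (G n *v z2)))"
      by (simp add: a_def b_def Mv)
    also have "\<dots> > 0" 
    proof (rule mult_pos_pos)
      show "0 < 1 / norm (G n) * (1 / norm (G n))" using nG[of n] by simp
      show "0 < (f \<bullet> (G n *v z1)) * (f \<bullet> (G n *v z2))" using sign[OF G z1 z2] by blast
    qed
    finally show ?thesis .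
  qed
  have "(\<lambda>n. a n * b n) \<longlonglongrightarrow> d * (f \<bullet> (A *v v)) * (- (d * (f \<bullet> (A *v v))))"
    by (intro tendsto_mult alim blim)
  then have "0 \<le> d * (f \<bullet> (A *v v)) * (- (d * (f \<bullet> (A *v v))))"
    by (rule LIMSEQ_le_const) (use abpos less_imp_le in auto)
  moreover have "d * (f \<bullet> (A *v v)) * (- (d * (f \<bullet> (A *v v)))) = - ((d * (f \<bullet> (A *v v)))^2)"
    by (simp add: power2_eq_square)
  ultimately have "(d * (f \<bullet> (A *v v)))^2 \<le> 0" by linarith
  then have "d * (f \<bullet> (A *v v)) = 0" by simp
  then have fAv: "f \<bullet> (A *v v) = 0" using d by simp
  obtain B where B: "\<forall>x\<in>closure \<Omega>. norm x \<le> B"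
    using cl_compact compact_imp_bounded bounded_iff by metis
  have "(\<lambda>n. M n *v z1) \<longlonglongrightarrow> 0"
  proof (rule Lim_null_comparison)
    show "\<forall>\<^sub>F n in sequentially. norm (M n *v z1) \<le> \<bar>a n\<bar> * B"
    proof (intro always_eventually allI)
      fix n
      have gz: "f \<bullet> (G n *v z1) \<noteq> 0" using aut_nz[OF G z1] .
      have "M n *v z1 = a n *\<^sub>R proj_act f (G n) z1"
        using gz nG by (simp add: a_def M proj_act_def scaleR_matrix_vector_assoc[symmetric])
      moreover have "norm (proj_act f (G n) z1) \<le> B"
        using B aut_in[OF G z1] closure_subset by blast
      ultimately show "norm (M n *v z1) \<le> \<bar>a n\<bar> * B"
        by (simp add: mult_left_mono)
    qed
    show "(\<lambda>n. \<bar>a n\<bar> * B) \<longlonglongrightarrow> 0"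
      using tendsto_mult[OF tendsto_rabs[OF alim] tendsto_const[of B]] fAv by simp
  qed
  then have "d *\<^sub>R (A *v v) = 0" using Mz1 LIMSEQ_unique by blast
  then show False using d Av by simp
qed


lemma lim_orbit:
  fixes G :: "nat \<Rightarrow> real^'n^'n"
  assumes G: "\<And>n. G n \<in> Aut f \<Omega>" and z: "\<And>n. z n \<in> \<Omega>" and zl: "z \<longlonglongrightarrow> z0"
    and z0: "z0 \<in> \<Omega>"
    and conv: "(\<lambda>n. proj_act f (G n) (z n)) \<longlonglongrightarrow> p" and pn: "p \<notin> \<Omega>"
  shows "p islimpt range (\<lambda>n. proj_act f (G n) z0)"
proof -
  have nG: "G n \<noteq> 0" for n using aut_nz[OF G z0, of n] by auto
  define M where "M n = (1 / norm (G n)) *\<^sub>R G n" for n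
  have nM: "M n \<in> sphere 0 1" for n using nG by (simp add: M_def)
  obtain A r where A: "A \<in> sphere 0 1" and r: "strict_mono r" and Ml: "(M \<circ> r) \<longlonglongrightarrow> A"
    using compact_sphere[of "0::real^'n^'n" 1] nM
    unfolding compact_eq_seq_compact_metric seq_compact_def by metis
  have nA: "A \<noteq> 0" using A by auto
  have key: "\<And>u. u \<in> \<Omega> \<Longrightarrow> A *v u \<noteq> 0"
    by (rule kernel_lemma[of "G \<circ> r" "M \<circ> r"]) (use G nG Ml nA in \<open>auto simp: M_def\<close>)
  have liftM: "M n *v v = (f \<bullet> (M n *v v)) *\<^sub>R proj_act f (G n) v" if "v \<in> \<Omega>" for n v
    using aut_nz[OF G that, of n] nG
    by (simp add: M_def proj_act_def scaleR_matrix_vector_assoc[symmetric])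
  have l1: "(\<lambda>n. M (r n) *v z (r n)) \<longlonglongrightarrow> A *v z0"
    using tendsto_mv[OF Ml LIMSEQ_subseq_LIMSEQ[OF zl r]] by (simp add: o_def)
  have l2: "(\<lambda>n. M (r n) *v z (r n)) \<longlonglongrightarrow> (f \<bullet> (A *v z0)) *\<^sub>R p"
  proof -
    have "(\<lambda>n. (f \<bullet> (M (r n) *v z (r n))) *\<^sub>R proj_act f (G (r n)) (z (r n)))
           \<longlonglongrightarrow> (f \<bullet> (A *v z0)) *\<^sub>R p"
      using LIMSEQ_subseq_LIMSEQ[OF conv r]
      by (intro tendsto_scaleR tendsto_inner tendsto_const l1) (simp add: o_def)
    then show ?thesis using liftM[OF z] by simp
  qed
  have Az: "A *v z0 = (f \<bullet> (A *v z0)) *\<^sub>R p" using LIMSEQ_unique[OF l1 l2] .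
  then have sig: "f \<bullet> (A *v z0) \<noteq> 0" using key[OF z0] by auto
  have l3: "(\<lambda>n. M (r n) *v z0) \<longlonglongrightarrow> A *v z0"
    using tendsto_mv[OF Ml tendsto_const[of z0]] by (simp add: o_def)
  have l4: "(\<lambda>n. (1 / (f \<bullet> (M (r n) *v z0))) *\<^sub>R (M (r n) *v z0))
      \<longlonglongrightarrow> (1 / (f \<bullet> (A *v z0))) *\<^sub>R (A *v z0)"
    using sig by (intro tendsto_scaleR tendsto_divide tendsto_inner tendsto_const l3) auto
  have eq: "proj_act f (G (r n)) z0 = (1 / (f \<bullet> (M (r n) *v z0))) *\<^sub>R (M (r n) *v z0)" for n
  proof -
    have "f \<bullet> (M (r n) *v z0) \<noteq> 0"
      using aut_nz[OF G z0, of "r n"] nG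
      by (simp add: M_def scaleR_matrix_vector_assoc[symmetric])
    then have "(1 / (f \<bullet> (M (r n) *v z0))) *\<^sub>R (M (r n) *v z0)
       = (1 / (f \<bullet> (M (r n) *v z0))) *\<^sub>R ((f \<bullet> (M (r n) *v z0)) *\<^sub>R proj_act f (G (r n)) z0)"
      using liftM[OF z0, of "r n"] by metis
    also have "\<dots> = proj_act f (G (r n)) z0" using \<open>f \<bullet> (M (r n) *v z0) \<noteq> 0\<close> by simp
    finally show ?thesis by simp
  qed
  have "(1 / (f \<bullet> (A *v z0))) *\<^sub>R (A *v z0) = p"
    using sig by (subst Az) simp
  then have l5: "(\<lambda>n. proj_act f (G (r n)) z0) \<longlonglongrightarrow> p" using l4 eq by simp
  show ?thesis
    unfolding islimpt_sequential
    by (rule exI[of _ "\<lambda>n. proj_act f (G (r n)) z0"]) (use l5 aut_in[OF G z0] pn in auto)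
qed


lemma cor_sub: "Cor f \<Omega> H \<subseteq> \<Omega>"
  by (auto simp: Cor_def)

lemma cor_closure:
  assumes aH: "aut_subgroup f \<Omega> H" and cc: "convex_cocompact f \<Omega> H"
    and p: "p \<in> closure (Cor f \<Omega> H)" and pn: "p \<notin> \<Omega>"
  shows "p \<in> orbital_limit_set f \<Omega> H"
proof -
  obtain K where K: "compact K" "K \<subseteq> Cor f \<Omega> H" "Cor f \<Omega> H \<subseteq> (\<Union>g\<in>H. proj_act f g ` K)"
    using cc by (auto simp: convex_cocompact_def)
  have HA: "H \<subseteq> Aut f \<Omega>" using aH by (simp add: aut_subgroup_def)
  obtain c where c: "\<And>n. c n \<in> Cor f \<Omega> H" and cl: "c \<longlonglongrightarrow> p"
    using p unfolding closure_sequential by blast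
  have "\<forall>n. \<exists>g k. g \<in> H \<and> k \<in> K \<and> c n = proj_act f g k"
    using c K(3) by blast
  then obtain g k where gk: "\<And>n. g n \<in> H" "\<And>n. k n \<in> K" "\<And>n. c n = proj_act f (g n) (k n)"
    by metis
  obtain k0 r where k0: "k0 \<in> K" and r: "strict_mono r" and kl: "(k \<circ> r) \<longlonglongrightarrow> k0"
    using K(1) gk(2) unfolding compact_eq_seq_compact_metric seq_compact_def by metis
  have KO: "K \<subseteq> \<Omega>" using K(2) cor_sub by blast
  have "p islimpt range (\<lambda>n. proj_act f ((g \<circ> r) n) k0)"
  proof (rule lim_orbit[of "g \<circ> r" "k \<circ> r"])
    show "(\<lambda>n. proj_act f ((g \<circ> r) n) ((k \<circ> r) n)) \<longlonglongrightarrow> p"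
      using LIMSEQ_subseq_LIMSEQ[OF cl r] gk(3) by (simp add: o_def)
  qed (use gk HA KO k0 kl pn in auto)
  then have "p islimpt orbit f H k0"
    by (rule islimpt_subset) (use gk(1) in \<open>auto simp: orbit_def\<close>)
  moreover have "p \<in> pboundary \<Omega>"
    using pn closure_mono[OF cor_sub] p by (auto simp: pboundary_def)
  ultimately show ?thesis using k0 KO by (auto simp: orbital_limit_set_def)
qed

lemma lam_sub_cor:
  assumes cc: "convex_cocompact f \<Omega> H" and p: "p \<in> orbital_limit_set f \<Omega> H"
  shows "p \<in> closure (Cor f \<Omega> H)"
proof -
  obtain c0 where c0: "c0 \<in> Cor f \<Omega> H" using cc by (auto simp: convex_cocompact_def)
  define t where "t n = inverse (real (Suc n)) / 2" for n
  have pc: "p \<in> closure \<Omega>" using p by (auto simp: orbital_limit_set_def pboundary_def)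
  have "(1 - t n) *\<^sub>R p + t n *\<^sub>R c0 \<in> Cor f \<Omega> H" for n
  proof -
    have "(1 - t n) *\<^sub>R p + t n *\<^sub>R c0 \<in> \<Omega>"
      using mix[of c0 p "t n"] c0 cor_sub pc tseq_pos[of n] by (auto simp: t_def)
    moreover have "(1 - t n) *\<^sub>R p + t n *\<^sub>R c0 \<in> convex hull (orbital_limit_set f \<Omega> H)"
      using convexD[OF convex_convex_hull hull_inc[OF p], of c0 "1 - t n" "t n"] c0 tseq_pos[of n]
      by (auto simp: Cor_def t_def)
    ultimately show ?thesis by (simp add: Cor_def)
  qed
  moreover have "(\<lambda>n. (1 - t n) *\<^sub>R p + t n *\<^sub>R c0) \<longlonglongrightarrow> p"
    using comb_lim[OF tseq] by (simp add: t_def)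
  ultimately show ?thesis unfolding closure_sequential
    by (intro exI[of _ "\<lambda>n. (1 - t n) *\<^sub>R p + t n *\<^sub>R c0"]) auto
qed


lemma weight:
  assumes g: "g \<in> Aut f \<Omega>" and k: "k \<in> \<Omega>" and e: "e \<in> \<Omega>" and e2: "e2 \<in> \<Omega>" and kk: "kk \<in> \<Omega>"
    and Pk: "proj_act f g k = c" and Pe: "proj_act f g e = ex" and Pe2: "proj_act f g e2 = ey"
    and Pkk: "proj_act f g kk = d"
    and cd: "c = (1 - r) *\<^sub>R ex + r *\<^sub>R ey" and dd: "d = (1 - s) *\<^sub>R ex + s *\<^sub>R c"
    and r: "0 < r" "r < 1" and s: "0 < s" "s < 1"
  shows "\<exists>l. s * (1 - r) / (s * (1 - r) + (1 - s)) \<le> l \<and> l \<le> 1 \<and> kk = (1 - l) *\<^sub>R e + l *\<^sub>R k"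
proof -
  define \<alpha> where "\<alpha> = f \<bullet> (g *v e)"
  define \<beta> where "\<beta> = f \<bullet> (g *v k)"
  define \<gamma> where "\<gamma> = f \<bullet> (g *v e2)"
  define \<mu> where "\<mu> = f \<bullet> (g *v kk)"
  have nz: "\<alpha> \<noteq> 0" "\<beta> \<noteq> 0" "\<gamma> \<noteq> 0" "\<mu> \<noteq> 0"
    using aut_nz[OF g] k e e2 kk by (auto simp: \<alpha>_def \<beta>_def \<gamma>_def \<mu>_def)
  have ge: "g *v e = \<alpha> *\<^sub>R ex" using lift[of g e] nz Pe by (simp add: \<alpha>_def)
  have gk: "g *v k = \<beta> *\<^sub>R c" using lift[of g k] nz Pk by (simp add: \<beta>_def)
  have ge2: "g *v e2 = \<gamma> *\<^sub>R ey" using lift[of g e2] nz Pe2 by (simp add: \<gamma>_def)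
  have gkk: "g *v kk = \<mu> *\<^sub>R d" using lift[of g kk] nz Pkk by (simp add: \<mu>_def)
  have sab: "\<alpha> * \<beta> > 0" using sign[OF g e k] by (simp add: \<alpha>_def \<beta>_def)
  have sbg: "\<beta> * \<gamma> > 0" using sign[OF g k e2] by (simp add: \<gamma>_def \<beta>_def)
  have smb: "\<mu> * \<beta> > 0" using sign[OF g kk k] by (simp add: \<mu>_def \<beta>_def)
  have sma: "\<mu> * \<alpha> > 0" using sign[OF g kk e] by (simp add: \<mu>_def \<alpha>_def)
  define a where "a = \<mu> * (1 - s) / \<alpha>"
  define l where "l = \<mu> * s / \<beta>"
  have "g *v (a *\<^sub>R e + l *\<^sub>R k) = a *\<^sub>R (g *v e) + l *\<^sub>R (g *v k)"
    by (simp add: matrix_vector_right_distrib matrix_vector_mult_scaleR)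
  also have "\<dots> = (\<mu> * (1 - s)) *\<^sub>R ex + (\<mu> * s) *\<^sub>R c"
    using nz by (simp add: ge gk a_def l_def)
  also have "\<dots> = g *v kk" using gkk dd by (simp add: scaleR_add_right)
  finally have kkeq: "kk = a *\<^sub>R e + l *\<^sub>R k" using aut_inj[OF g] by metis
  have "1 = a + l"
    using arg_cong[OF kkeq, of "inner f"] om_f[OF kk] om_f[OF e] om_f[OF k]
    by (simp add: inner_add_right)
  then have aeq: "a = 1 - l" by simp
  define b1 where "b1 = \<beta> * (1 - r) / \<alpha>"
  define b2 where "b2 = \<beta> * r / \<gamma>"
  have "g *v (b1 *\<^sub>R e + b2 *\<^sub>R e2) = b1 *\<^sub>R (g *v e) + b2 *\<^sub>R (g *v e2)"
    by (simp add: matrix_vector_right_distrib matrix_vector_mult_scaleR)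
  also have "\<dots> = (\<beta> * (1 - r)) *\<^sub>R ex + (\<beta> * r) *\<^sub>R ey"
    using nz by (simp add: ge ge2 b1_def b2_def)
  also have "\<dots> = g *v k" using gk cd by (simp add: scaleR_add_right)
  finally have keq: "k = b1 *\<^sub>R e + b2 *\<^sub>R e2" using aut_inj[OF g] by metis
  have b12: "1 = b1 + b2"
    using arg_cong[OF keq, of "inner f"] om_f[OF k] om_f[OF e] om_f[OF e2]
    by (simp add: inner_add_right)
  have "b2 > 0"
  proof -
    have "\<beta> / \<gamma> > 0" using sbg by (simp add: zero_less_divide_iff zero_less_mult_iff)
    then have "(\<beta> / \<gamma>) * r > 0" using r by (intro mult_pos_pos)
    moreover have "(\<beta> / \<gamma>) * r = b2" by (simp add: b2_def)
    ultimately show ?thesis by simp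
  qed
  then have "b1 < 1" using b12 by simp
  define \<rho> where "\<rho> = \<alpha> / \<beta>"
  have rho_pos: "\<rho> > 0" using sab by (simp add: \<rho>_def zero_less_divide_iff zero_less_mult_iff)
  have "b1 = (1 - r) / \<rho>" using nz by (simp add: b1_def \<rho>_def)
  then have rho: "1 - r < \<rho>" using \<open>b1 < 1\<close> rho_pos by (simp add: divide_less_eq)
  have apos: "a > 0"
  proof -
    have "\<mu> / \<alpha> > 0" using sma by (simp add: zero_less_divide_iff zero_less_mult_iff)
    then have "(\<mu> / \<alpha>) * (1 - s) > 0" using s by (intro mult_pos_pos) auto
    moreover have "(\<mu> / \<alpha>) * (1 - s) = a" by (simp add: a_def)
    ultimately show ?thesis by simp
  qed
  have "a = l * (1 - s) / (s * \<rho>)" using nz s by (simp add: a_def l_def \<rho>_def field_simps)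
  then have "l * (s * \<rho> + (1 - s)) = s * \<rho>"
    using aeq s rho_pos by (simp add: field_simps)
  moreover have "s * \<rho> + (1 - s) \<noteq> 0"
  proof -
    have "s * \<rho> > 0" using s rho_pos by (rule_tac mult_pos_pos) auto
    moreover have "1 - s > 0" using s by simp
    ultimately show ?thesis by linarith
  qed
  ultimately have leq: "l = s * \<rho> / (s * \<rho> + (1 - s))"
    by (subst nonzero_eq_divide_eq) auto
  have "s * (1 - r) / (s * (1 - r) + (1 - s)) \<le> s * \<rho> / (s * \<rho> + (1 - s))"
  proof -
    have p1: "s * (1 - r) + (1 - s) > 0" "s * \<rho> + (1 - s) > 0" using s r rho_pos by (simp_all add: add_pos_pos)
    have "s * (1 - r) * (s * \<rho> + (1 - s)) \<le> s * \<rho> * (s * (1 - r) + (1 - s))"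
    proof -
      have "s * (1 - r) * (1 - s) \<le> s * \<rho> * (1 - s)"
        using rho s by (intro mult_right_mono mult_left_mono) auto
      then show ?thesis by (simp add: algebra_simps)
    qed
    then show ?thesis using p1 by (simp add: divide_simps)
  qed
  then show ?thesis using leq apos aeq kkeq
    by (intro exI[of _ l]) auto
qed


lemma face_step:
  assumes aH: "aut_subgroup f \<Omega> H" and cc: "convex_cocompact f \<Omega> H"
    and w: "w \<in> orbital_limit_set f \<Omega> H" and x: "x \<in> closure \<Omega>" and y: "y \<in> closure \<Omega>"
    and r: "0 < r" "r < 1" and wd: "w = (1 - r) *\<^sub>R x + r *\<^sub>R y"
    and s: "0 < s" "s < 1" and qn: "(1 - s) *\<^sub>R x + s *\<^sub>R w \<notin> \<Omega>"
  shows "(1 - s) *\<^sub>R x + s *\<^sub>R w \<in> orbital_limit_set f \<Omega> H"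
proof -
  define q where "q = (1 - s) *\<^sub>R x + s *\<^sub>R w"
  obtain K where K: "compact K" "K \<subseteq> Cor f \<Omega> H" "Cor f \<Omega> H \<subseteq> (\<Union>g\<in>H. proj_act f g ` K)"
    using cc by (auto simp: convex_cocompact_def)
  have HA: "H \<subseteq> Aut f \<Omega>" using aH by (simp add: aut_subgroup_def)
  have KO: "K \<subseteq> \<Omega>" using K(2) cor_sub by blast
  obtain c0 where c0: "c0 \<in> Cor f \<Omega> H" using cc by (auto simp: convex_cocompact_def)
  have c0O: "c0 \<in> \<Omega>" using c0 cor_sub by blast
  define t where "t n = inverse (real (Suc n)) / 2" for n
  have t1: "0 < t n" and t2: "t n \<le> 1" for n using tseq_pos[of n] by (auto simp: t_def)
  have wc: "w \<in> closure \<Omega>" using w by (auto simp: orbital_limit_set_def pboundary_def)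
  have qc: "q \<in> closure \<Omega>" unfolding q_def
    using convexD[OF convex_closure[OF om_convex] x wc, of "1 - s" s] s by auto
  define cn where "cn n = (1 - t n) *\<^sub>R w + t n *\<^sub>R c0" for n
  define ex where "ex n = (1 - t n) *\<^sub>R x + t n *\<^sub>R c0" for n
  define ey where "ey n = (1 - t n) *\<^sub>R y + t n *\<^sub>R c0" for n
  define dn where "dn n = (1 - t n) *\<^sub>R q + t n *\<^sub>R c0" for n
  have exO: "ex n \<in> \<Omega>" for n unfolding ex_def by (rule mix[OF c0O x t1 t2])
  have eyO: "ey n \<in> \<Omega>" for n unfolding ey_def by (rule mix[OF c0O y t1 t2])
  have dnO: "dn n \<in> \<Omega>" for n unfolding dn_def by (rule mix[OF c0O qc t1 t2])
  have cnC: "cn n \<in> Cor f \<Omega> H" for n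
  proof -
    have "cn n \<in> \<Omega>" unfolding cn_def by (rule mix[OF c0O wc t1 t2])
    moreover have "cn n \<in> convex hull (orbital_limit_set f \<Omega> H)"
      unfolding cn_def
      using convexD[OF convex_convex_hull hull_inc[OF w], of c0 "1 - t n" "t n"] c0 t1[of n] t2[of n]
      by (auto simp: Cor_def)
    ultimately show ?thesis by (simp add: Cor_def)
  qed
  have "\<forall>n. \<exists>g k. g \<in> H \<and> k \<in> K \<and> cn n = proj_act f g k"
    using cnC K(3) by blast
  then obtain g k where gH: "\<And>n. g n \<in> H" and kK: "\<And>n. k n \<in> K"
    and gk: "\<And>n. cn n = proj_act f (g n) (k n)"
    by metis
  have gA: "g n \<in> Aut f \<Omega>" for n using gH HA by blast
  have "\<forall>n. \<exists>u\<in>\<Omega>. proj_act f (g n) u = ex n" using aut_surj[OF gA exO] by blast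
  then obtain e where eO: "\<And>n. e n \<in> \<Omega>" and ee: "\<And>n. proj_act f (g n) (e n) = ex n" by metis
  have "\<forall>n. \<exists>u\<in>\<Omega>. proj_act f (g n) u = ey n" using aut_surj[OF gA eyO] by blast
  then obtain e2 where e2O: "\<And>n. e2 n \<in> \<Omega>" and ee2: "\<And>n. proj_act f (g n) (e2 n) = ey n" by metis
  have "\<forall>n. \<exists>u\<in>\<Omega>. proj_act f (g n) u = dn n" using aut_surj[OF gA dnO] by blast
  then obtain kk where kkO: "\<And>n. kk n \<in> \<Omega>" and ekk: "\<And>n. proj_act f (g n) (kk n) = dn n" by metis
  have rc: "cn n = (1 - r) *\<^sub>R ex n + r *\<^sub>R ey n" for n
    by (simp add: cn_def ex_def ey_def wd algebra_simps)
  have rd: "dn n = (1 - s) *\<^sub>R ex n + s *\<^sub>R cn n" for n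
    by (simp add: cn_def ex_def dn_def q_def algebra_simps)
  define t0 where "t0 = s * (1 - r) / (s * (1 - r) + (1 - s))"
  have t0: "t0 > 0"
  proof -
    have "s * (1 - r) > 0" using s r by simp
    moreover have "1 - s > 0" using s by simp
    ultimately show ?thesis unfolding t0_def by simp
  qed
  have "\<forall>n. \<exists>l. t0 \<le> l \<and> l \<le> 1 \<and> kk n = (1 - l) *\<^sub>R e n + l *\<^sub>R k n"
  proof
    fix n
    show "\<exists>l. t0 \<le> l \<and> l \<le> 1 \<and> kk n = (1 - l) *\<^sub>R e n + l *\<^sub>R k n"
      unfolding t0_def
      by (rule weight[OF gA subsetD[OF KO kK] eO e2O kkO gk[symmetric] ee ee2 ekk rc rd r s])
  qed
  then obtain l where l: "\<And>n. t0 \<le> l n" "\<And>n. l n \<le> 1"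
    and kkeq: "\<And>n. kk n = (1 - l n) *\<^sub>R e n + l n *\<^sub>R k n" by metis
  define S where "S = K \<times> (closure \<Omega> \<times> {t0..1})"
  have Sc: "compact S" unfolding S_def
    by (intro compact_Times K(1) cl_compact compact_Icc)
  have inS: "(k n, e n, l n) \<in> S" for n
    using kK eO l subsetD[OF closure_subset[of \<Omega>]] by (auto simp: S_def)
  obtain L \<rho> where L: "L \<in> S" and \<rho>: "strict_mono \<rho>"
    and Ll: "((\<lambda>n. (k n, e n, l n)) \<circ> \<rho>) \<longlonglongrightarrow> L"
    using seq_compactE[OF compact_imp_seq_compact[OF Sc], of "\<lambda>n. (k n, e n, l n)"] inS by blast
  obtain k0 e0 l0 where L3: "L = (k0, e0, l0)" by (cases L) auto
  have k0: "k0 \<in> \<Omega>" and e0: "e0 \<in> closure \<Omega>" and l0: "t0 \<le> l0" "l0 \<le> 1"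
    using L KO by (auto simp: S_def L3)
  have kl: "(\<lambda>n. k (\<rho> n)) \<longlonglongrightarrow> k0"
    using tendsto_fst[OF Ll] by (simp add: L3 o_def)
  have el: "(\<lambda>n. e (\<rho> n)) \<longlonglongrightarrow> e0"
    using tendsto_fst[OF tendsto_snd[OF Ll]] by (simp add: L3 o_def)
  have ll: "(\<lambda>n. l (\<rho> n)) \<longlonglongrightarrow> l0"
    using tendsto_snd[OF tendsto_snd[OF Ll]] by (simp add: L3 o_def)
  define z0 where "z0 = (1 - l0) *\<^sub>R e0 + l0 *\<^sub>R k0"
  have z0: "z0 \<in> \<Omega>" unfolding z0_def using t0 l0 by (intro mix[OF k0 e0]) auto
  have zl: "(\<lambda>n. kk (\<rho> n)) \<longlonglongrightarrow> z0"
    unfolding kkeq z0_def by (intro tendsto_intros el kl ll)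
  have dl: "(\<lambda>n. dn (\<rho> n)) \<longlonglongrightarrow> q"
  proof -
    have "dn \<longlonglongrightarrow> q" unfolding dn_def t_def by (rule comb_lim[OF tseq])
    then show ?thesis using LIMSEQ_subseq_LIMSEQ[OF _ \<rho>] by (simp add: o_def)
  qed
  have "q islimpt range (\<lambda>n. proj_act f ((g \<circ> \<rho>) n) z0)"
  proof (rule lim_orbit[of "g \<circ> \<rho>" "kk \<circ> \<rho>"])
    show "(\<lambda>n. proj_act f ((g \<circ> \<rho>) n) ((kk \<circ> \<rho>) n)) \<longlonglongrightarrow> q"
      using dl ekk by (simp add: o_def)
  qed (use gA kkO zl z0 qn q_def in \<open>auto simp: o_def\<close>)
  then have "q islimpt orbit f H z0"
    by (rule islimpt_subset) (use gH in \<open>auto simp: orbit_def\<close>)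
  moreover have "q \<in> pboundary \<Omega>" using qc qn by (auto simp: pboundary_def q_def)
  ultimately show ?thesis using z0 by (auto simp: orbital_limit_set_def q_def)
qed

lemma endpoint:
  assumes aH: "aut_subgroup f \<Omega> H" and cc: "convex_cocompact f \<Omega> H"
    and w: "w \<in> orbital_limit_set f \<Omega> H" and x: "x \<in> closure \<Omega>" and y: "y \<in> closure \<Omega>"
    and r: "0 < r" "r < 1" and wd: "w = (1 - r) *\<^sub>R x + r *\<^sub>R y"
    and seg: "open_segment x y \<subseteq> pboundary \<Omega>" and xy: "x \<noteq> y" and xn: "x \<notin> \<Omega>"
  shows "x \<in> orbital_limit_set f \<Omega> H"
proof -
  define s where "s m = inverse (real (Suc m)) / 2" for m
  have s1: "0 < s m" and s2: "s m < 1" for m using tseq_pos[of m] by (auto simp: s_def)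
  have qC: "(1 - s m) *\<^sub>R x + s m *\<^sub>R w \<in> closure (Cor f \<Omega> H)" for m
  proof -
    have sr: "0 < s m * r" "s m * r < 1"
    proof -
      show "0 < s m * r" using s1[of m] r by simp
      have "s m * r < 1 * 1" using s1[of m] s2[of m] r by (intro mult_strict_mono) auto
      then show "s m * r < 1" by simp
    qed
    have eq: "(1 - s m) *\<^sub>R x + s m *\<^sub>R w = (1 - s m * r) *\<^sub>R x + (s m * r) *\<^sub>R y"
      by (simp add: wd algebra_simps)
    have "(1 - s m) *\<^sub>R x + s m *\<^sub>R w \<in> open_segment x y"
      unfolding in_segment eq using xy sr by blast
    then have "(1 - s m) *\<^sub>R x + s m *\<^sub>R w \<notin> \<Omega>" using seg by (auto simp: pboundary_def)
    then have "(1 - s m) *\<^sub>R x + s m *\<^sub>R w \<in> orbital_limit_set f \<Omega> H"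
      by (rule face_step[OF aH cc w x y r wd s1 s2])
    then show ?thesis by (rule lam_sub_cor[OF cc])
  qed
  have lim: "(\<lambda>m. (1 - s m) *\<^sub>R x + s m *\<^sub>R w) \<longlonglongrightarrow> x"
    unfolding s_def by (rule comb_lim[OF tseq])
  have "\<forall>m. (\<lambda>m. (1 - s m) *\<^sub>R x + s m *\<^sub>R w) m \<in> closure (Cor f \<Omega> H)"
    using qC by simp
  then have "x \<in> closure (Cor f \<Omega> H)"
    using closed_sequentially[OF closed_closure _ lim] by blast
  then show ?thesis by (rule cor_closure[OF aH cc _ xn])
qed

end

theorem mainTheorem2:
  fixes f :: "real^'n" and \<Omega> \<Lambda> :: "(real^'n) set" and \<H> :: "(real^'n^'n) set set"
  assumes "properly_convex_domain f \<Omega>"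
    and "\<Lambda> \<subseteq> pboundary \<Omega>"
    and "boundary_convex \<Omega> \<Lambda>"
    and "contains_faces \<Omega> \<Lambda>"
    and "\<forall>H\<in>\<H>. aut_subgroup f \<Omega> H \<and> convex_cocompact f \<Omega> H"
    and "\<forall>H1\<in>\<H>. \<forall>H2\<in>\<H>. H1 \<noteq> H2 \<longrightarrow>
           orbital_limit_set f \<Omega> H1 \<inter> orbital_limit_set f \<Omega> H2 = {}"
    and "\<forall>p \<in> \<Lambda> - (\<Union>H\<in>\<H>. orbital_limit_set f \<Omega> H). extreme_bdry \<Omega> p"
    and "x \<in> \<Lambda>" and "y \<in> \<Lambda>" and "x \<noteq> y"
    and "\<not> (\<exists>H\<in>\<H>. x \<in> orbital_limit_set f \<Omega> H \<and> y \<in> orbital_limit_set f \<Omega> H)"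
  shows "open_segment x y \<subseteq> \<Omega>"
proof (rule ccontr)
  assume nsub: "\<not> open_segment x y \<subseteq> \<Omega>"
  note pcd = assms(1)
  have xb: "x \<in> pboundary \<Omega>" and yb: "y \<in> pboundary \<Omega>" using assms(2,8,9) by auto
  then have xc: "x \<in> closure \<Omega>" and xn: "x \<notin> \<Omega>" and yc: "y \<in> closure \<Omega>" and yn: "y \<notin> \<Omega>"
    by (auto simp: pboundary_def)
  have noO: "u \<notin> \<Omega>" if u: "u \<in> open_segment x y" for u
  proof
    assume uO: "u \<in> \<Omega>"
    obtain a where a: "0 < a" "a < 1" and ua: "u = (1 - a) *\<^sub>R x + a *\<^sub>R y"
      using u unfolding in_segment by blast
    have "open_segment x y \<subseteq> \<Omega>"
    proof
      fix v assume "v \<in> open_segment x y"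
      then obtain b where b: "0 < b" "b < 1" and vb: "v = (1 - b) *\<^sub>R x + b *\<^sub>R y"
        unfolding in_segment by blast
      show "v \<in> \<Omega>"
      proof (cases "b \<le> a")
        case True
        define t where "t = b / a"
        have t: "0 < t" "t \<le> 1" using a b True by (auto simp: t_def)
        have ta: "t * a = b" using a by (simp add: t_def)
        have "(1 - t) *\<^sub>R x + t *\<^sub>R u = (1 - t * a) *\<^sub>R x + (t * a) *\<^sub>R y"
          by (simp add: ua algebra_simps)
        then have "v = (1 - t) *\<^sub>R x + t *\<^sub>R u" using ta vb by simp
        then show ?thesis using mix[OF pcd uO xc t] by simp
      next
        case False
        define t where "t = (1 - b) / (1 - a)"
        have t: "0 < t" "t \<le> 1" using a b False by (auto simp: t_def)
        have ta: "t * (1 - a) = 1 - b" using a by (simp add: t_def)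
        have "(1 - t) *\<^sub>R y + t *\<^sub>R u = (t * (1 - a)) *\<^sub>R x + (1 - t * (1 - a)) *\<^sub>R y"
          by (simp add: ua algebra_simps)
        then have "v = (1 - t) *\<^sub>R y + t *\<^sub>R u" using ta vb by simp
        then show ?thesis using mix[OF pcd uO yc t] by simp
      qed
    qed
    then show False using nsub by blast
  qed
  have segB: "open_segment x y \<subseteq> pboundary \<Omega>"
  proof
    fix u assume u: "u \<in> open_segment x y"
    have "closed_segment x y \<subseteq> closure \<Omega>"
      by (rule closed_segment_subset[OF xc yc convex_closure[OF om_convex[OF pcd]]])
    then have "u \<in> closure \<Omega>" using u segment_open_subset_closed by blast
    then show "u \<in> pboundary \<Omega>" using noO[OF u] by (simp add: pboundary_def)
  qed
  define w where "w = midpoint x y"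
  have wseg: "w \<in> open_segment x y" using assms(10) by (simp add: w_def midpoint_in_open_segment)
  have wL: "w \<in> \<Lambda>" using assms(3,8,9) segB wseg by (auto simp: boundary_convex_def)
  have "\<not> extreme_bdry \<Omega> w" using segB wseg assms(10) by (auto simp: extreme_bdry_def)
  then obtain H where H: "H \<in> \<H>" and wH: "w \<in> orbital_limit_set f \<Omega> H"
    using assms(7) wL by blast
  have aH: "aut_subgroup f \<Omega> H" and cc: "convex_cocompact f \<Omega> H" using assms(5) H by auto
  have wd: "w = (1 - 1/2) *\<^sub>R x + (1/2) *\<^sub>R y"
    by (simp add: w_def midpoint_def algebra_simps)
  have wd2: "w = (1 - 1/2) *\<^sub>R y + (1/2) *\<^sub>R x"
    by (simp add: w_def midpoint_def algebra_simps)
  have "x \<in> orbital_limit_set f \<Omega> H"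
    by (rule endpoint[OF pcd aH cc wH xc yc _ _ wd segB assms(10) xn]) auto
  moreover have "y \<in> orbital_limit_set f \<Omega> H"
    by (rule endpoint[OF pcd aH cc wH yc xc _ _ wd2 _ _ yn])
       (use segB assms(10) in \<open>auto simp: open_segment_commute\<close>)
  ultimately show False using assms(11) H by blast
qed

end
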